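(* Let $Y$ be a complex Banach space and let $I\subseteq\mathbb R^n$ satisfy $I+I\subseteq I$, suppose that for every $\mathbf t'\in\mathbb R^n$ there exists a finite $M>0$ with $\mathbf t'+I_M\subseteq I$, and suppose that $\mathbb R^n\setminus[(I\cup(-I))+(I\cup(-I))]$ is bounded. If $F:\mathbb R^n\to Y$ and $G:\mathbb R^n\to Y$ are Bohr almost periodic and $F(\mathbf t)=G(\mathbf t)$ for all $\mathbf t\in I$, then $F(\mathbf t)=G(\mathbf t)$ for all $\mathbf t\in\mathbb R^n$.
   Context: $I_M:=\{\lambda\in I:|\lambda|\ge M\}$. A continuous $F:\mathbb R^n\to Y$ is Bohr almost periodic if for every $\epsilon>0$ there exists $l>0$ such that every closed Euclidean ball of radius $l$ contains some $\tau$ with $\|F(\mathbf t+\tau)-F(\mathbf t)\|_Y\le\epsilon$ for all $\mathbf t\in\mathbb R^n$. *)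

theory Defs
  imports "HOL-Analysis.Analysis"
begin

definition trunc_set :: "('a::real_normed_vector) set \<Rightarrow> real \<Rightarrow> 'a set" where
  "trunc_set I M = {x\<in>I. norm x \<ge> M}"

definition bohr_almost_periodic :: "(real ^ 'n \<Rightarrow> 'y::real_normed_vector) \<Rightarrow> bool" where
  "bohr_almost_periodic F \<longleftrightarrow> continuous_on UNIV F \<and>
     (\<forall>\<epsilon>>0. \<exists>l>0. \<forall>c. \<exists>\<tau>\<in>cball c l. \<forall>t. norm (F (t + \<tau>) - F t) \<le> \<epsilon>)"

end

theory Submission
  imports Defs
begin

lemma tri: "norm ((x::'a::real_normed_vector) - z) \<le> norm (x - y) + norm (y - z)"
proof -
  have "x - z = (x - y) + (y - z)" by simp
  then show ?thesis by (metis norm_triangle_ineq)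
qed

lemma tri2: "norm ((x::'a::real_normed_vector) - z) \<le> norm (x - y) + norm (z - y)"
  using tri[of x z y] by (simp add: norm_minus_commute)

lemma ap_uc:
  fixes F :: "real ^ 'n \<Rightarrow> 'y::real_normed_vector"
  assumes ap: "bohr_almost_periodic F" and e: "e > 0"
  shows "\<exists>d>0. \<forall>x y. dist x y < d \<longrightarrow> norm (F x - F y) \<le> e"
proof -
  from ap e obtain l where l: "l > 0"
    and per: "\<And>c. \<exists>\<tau>\<in>cball c l. \<forall>t. norm (F (t + \<tau>) - F t) \<le> e/3"
    unfolding bohr_almost_periodic_def by (meson divide_pos_pos zero_less_numeral)
  have "continuous_on (cball 0 (l+1)) F"
    using ap unfolding bohr_almost_periodic_def by (meson continuous_on_subset subset_UNIV)
  then have "uniformly_continuous_on (cball 0 (l+1)) F"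
    by (rule compact_uniformly_continuous) simp
  then obtain d0 where d0: "d0 > 0"
    and uc: "\<And>x y. x \<in> cball 0 (l+1) \<Longrightarrow> y \<in> cball 0 (l+1) \<Longrightarrow> dist y x < d0 \<Longrightarrow> dist (F y) (F x) < e/3"
  proof -
    have "e/3 > 0" using e by simp
    then have "\<exists>d>0. \<forall>x\<in>cball 0 (l+1). \<forall>x'\<in>cball 0 (l+1). dist x' x < d \<longrightarrow> dist (F x') (F x) < e/3"
      using \<open>uniformly_continuous_on (cball 0 (l+1)) F\<close> unfolding uniformly_continuous_on_def by blast
    then show ?thesis using that by blast
  qed
  show ?thesis
  proof (intro exI[of _ "min d0 1"] conjI allI impI)
    show "min d0 1 > 0" using d0 by simp
    fix x y :: "real ^ 'n" assume dxy: "dist x y < min d0 1"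
    obtain \<tau> where \<tau>: "\<tau> \<in> cball (-x) l" and p: "\<And>t. norm (F (t + \<tau>) - F t) \<le> e/3"
      using per by blast
    have n1: "norm (x + \<tau>) \<le> l" using \<tau> by (simp add: dist_norm norm_minus_commute add.commute)
    have "y + \<tau> = (x + \<tau>) + (y - x)" by simp
    then have "norm (y + \<tau>) \<le> norm (x + \<tau>) + norm (y - x)" by (metis norm_triangle_ineq)
    also have "norm (y - x) < 1" using dxy by (simp add: dist_norm norm_minus_commute)
    finally have n2: "norm (y + \<tau>) \<le> l + 1" using n1 by simp
    have "dist (x + \<tau>) (y + \<tau>) < d0" using dxy by (simp add: dist_norm)
    moreover have "x + \<tau> \<in> cball 0 (l+1)" "y + \<tau> \<in> cball 0 (l+1)"
      using n1 n2 by (auto simp: mem_cball_0)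
    ultimately have "dist (F (x + \<tau>)) (F (y + \<tau>)) < e/3"
      using uc[of "y + \<tau>" "x + \<tau>"] by blast
    then have m: "norm (F (x + \<tau>) - F (y + \<tau>)) < e/3" by (simp add: dist_norm)
    have "F x - F y = -(F (x + \<tau>) - F x) + (F (x + \<tau>) - F (y + \<tau>)) + (F (y + \<tau>) - F y)"
      by simp
    have "norm (F x - F y) \<le> norm (F x - F (x + \<tau>)) + norm (F (x + \<tau>) - F y)" by (rule tri)
    also have "norm (F (x + \<tau>) - F y) \<le> norm (F (x + \<tau>) - F (y + \<tau>)) + norm (F (y + \<tau>) - F y)" by (rule tri)
    finally have "norm (F x - F y) \<le> norm (F (x + \<tau>) - F x) + norm (F (x + \<tau>) - F (y + \<tau>)) + norm (F (y + \<tau>) - F y)"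
      by (simp add: norm_minus_commute)
    then show "norm (F x - F y) \<le> e" using p[of x] p[of y] m by linarith
  qed
qed

lemma ap_net:
  fixes F :: "real ^ 'n \<Rightarrow> 'y::real_normed_vector"
  assumes ap: "bohr_almost_periodic F" and e: "e > 0"
  shows "\<exists>S f. finite S \<and> (\<forall>s. f s \<in> S) \<and> (\<forall>s t. norm (F (t + s) - F (t + f s)) \<le> e)"
proof -
  obtain d where d: "d > 0" and uc: "\<And>x y. dist x y < d \<Longrightarrow> norm (F x - F y) \<le> e/2"
    using ap_uc[OF ap, of "e/2"] e by auto
  from ap e obtain l where l: "l > 0"
    and per: "\<And>c. \<exists>\<tau>\<in>cball c l. \<forall>t. norm (F (t + \<tau>) - F t) \<le> e/2"
    unfolding bohr_almost_periodic_def by (meson divide_pos_pos zero_less_numeral)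
  have tb: "\<forall>\<epsilon>>0. \<exists>k. finite k \<and> k \<subseteq> cball (0::real^'n) l \<and> cball 0 l \<subseteq> (\<Union>x\<in>k. ball x \<epsilon>)"
    by (rule seq_compact_imp_totally_bounded, rule compact_imp_seq_compact, rule compact_cball)
  have "\<exists>k. finite k \<and> k \<subseteq> cball (0::real^'n) l \<and> cball 0 l \<subseteq> (\<Union>x\<in>k. ball x d)"
    by (rule tb[rule_format, OF d])
  then obtain S :: "(real^'n) set" where S: "finite S" "S \<subseteq> cball 0 l" "cball 0 l \<subseteq> (\<Union>x\<in>S. ball x d)"
    by (elim exE conjE)
  have "\<forall>s. \<exists>r. r \<in> S \<and> (\<forall>t. norm (F (t + s) - F (t + r)) \<le> e)"
  proof
    fix s
    obtain \<tau> where \<tau>: "\<tau> \<in> cball s l" and p: "\<And>t. norm (F (t + \<tau>) - F t) \<le> e/2"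
      using per by blast
    have "s - \<tau> \<in> cball 0 l" using \<tau> by (simp add: dist_norm norm_minus_commute)
    then obtain r where r: "r \<in> S" "dist r (s - \<tau>) < d" using S(3) by auto
    show "\<exists>r. r \<in> S \<and> (\<forall>t. norm (F (t + s) - F (t + r)) \<le> e)"
    proof (intro exI conjI allI)
      show "r \<in> S" by fact
      fix t
      have eq: "t + s = (t + (s - \<tau>)) + \<tau>" by simp
      have a: "norm (F (t + s) - F (t + (s - \<tau>))) \<le> e/2" using p[of "t + (s - \<tau>)"] by simp
      have "dist (t + (s - \<tau>)) (t + r) < d" using r(2) by (simp add: dist_norm norm_minus_commute)
      then have b: "norm (F (t + (s - \<tau>)) - F (t + r)) \<le> e/2" using uc by blast
      have "norm (F (t + s) - F (t + r)) \<le> norm (F (t + s) - F (t + (s - \<tau>))) + norm (F (t + (s - \<tau>)) - F (t + r))"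
        by (rule tri)
      then show "norm (F (t + s) - F (t + r)) \<le> e" using a b by linarith
    qed
  qed
  then have "\<exists>f. \<forall>s. f s \<in> S \<and> (\<forall>t. norm (F (t + s) - F (t + f s)) \<le> e)"
    by (rule choice)
  then obtain f where "\<forall>s. f s \<in> S \<and> (\<forall>t. norm (F (t + s) - F (t + f s)) \<le> e)"
    by (elim exE)
  then show ?thesis using S(1) by blast
qed

theorem corollary2p36:
  fixes I :: "(real ^ 'n) set"
    and F G :: "real ^ 'n \<Rightarrow> 'y::banach"
  assumes "\<And>a b. a \<in> I \<Longrightarrow> b \<in> I \<Longrightarrow> a + b \<in> I"
    and "\<And>t'. \<exists>M>0. (\<lambda>x. t' + x) ` trunc_set I M \<subseteq> I"
    and "bounded (UNIV - {a + b | a b. a \<in> I \<union> uminus ` I \<and> b \<in> I \<union> uminus ` I})"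
    and "bohr_almost_periodic F"
    and "bohr_almost_periodic G"
    and "\<And>t. t \<in> I \<Longrightarrow> F t = G t"
  shows "\<forall>t. F t = G t"
proof -
  note add = assms(1)
  obtain w0 where l0: "w0 \<in> I" "w0 \<noteq> 0"
  proof (rule ccontr)
    assume "\<not> thesis"
    with that have "I \<subseteq> {0}" by blast
    then have z: "\<And>x. x \<in> I \<Longrightarrow> x = 0" by blast
    have "{a + b | a b. a \<in> I \<union> uminus ` I \<and> b \<in> I \<union> uminus ` I} \<subseteq> {0}"
    proof
      fix x assume "x \<in> {a + b | a b. a \<in> I \<union> uminus ` I \<and> b \<in> I \<union> uminus ` I}"
      then obtain a b where x: "x = a + b" "a \<in> I \<union> uminus ` I" "b \<in> I \<union> uminus ` I" by blast
      have "a = 0" using x(2) z by auto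
      moreover have "b = 0" using x(3) z by auto
      ultimately show "x \<in> {0}" using x(1) by simp
    qed
    then have "bounded (UNIV - {0::real^'n})"
      using assms(3) by (meson Diff_mono bounded_subset order_refl)
    then have b: "bounded (insert 0 (UNIV - {0::real^'n}))" by (simp only: bounded_insert)
    have "insert 0 (UNIV - {0::real^'n}) = UNIV" by auto
    then have "bounded (UNIV :: (real^'n) set)" using b by simp
    then show False using not_bounded_UNIV by blast
  qed
  have mult: "real m *\<^sub>R w0 \<in> I" if "m \<ge> 1" for m
    using that
  proof (induction m rule: dec_induct)
    case base then show ?case using l0 by simp
  next
    case (step m)
    then show ?case using add[OF step(3) l0(1)] by (simp add: scaleR_add_left add.commute)
  qed
  show ?thesis
  proof
    fix t
    have "norm (F t - G t) \<le> e" if e: "e > 0" for e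
    proof -
      obtain M where M: "M > 0" "(\<lambda>x. t + x) ` trunc_set I M \<subseteq> I" using assms(2) by blast
      obtain K :: nat where K: "M / norm w0 < real K" using reals_Archimedean2 by blast
      have "M / norm w0 > 0" using M(1) l0(2) by simp
      then have "real K > 0" using K by linarith
      then have K1: "K \<ge> 1" by simp
      have KM: "real K * norm w0 \<ge> M" using K l0 by (simp add: field_simps)
      define v where "v = real K *\<^sub>R w0"
      have inI: "t + real m *\<^sub>R v \<in> I" if "m \<ge> 1" for m
      proof -
        have mK: "1 \<le> m * K" using K1 that by (simp add: Suc_le_eq)
        have "real m *\<^sub>R v = real (m * K) *\<^sub>R w0" by (simp add: v_def)
        moreover have "real (m * K) *\<^sub>R w0 \<in> I" using mK by (rule mult)
        moreover have "norm (real (m * K) *\<^sub>R w0) \<ge> M"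
        proof -
          have "real K * norm w0 \<le> real m * (real K * norm w0)"
            using that mult_right_mono[of 1 "real m" "real K * norm w0"] by simp
          then show ?thesis using KM by simp
        qed
        ultimately have "real m *\<^sub>R v \<in> trunc_set I M" unfolding trunc_set_def by simp
        then show ?thesis using M(2) by blast
      qed
      obtain SF fF where SF: "finite SF" "\<forall>s. fF s \<in> SF" "\<forall>s u. norm (F (u + s) - F (u + fF s)) \<le> e/4"
        using ap_net[OF assms(4), of "e/4"] e by auto
      obtain SG fG where SG: "finite SG" "\<forall>s. fG s \<in> SG" "\<forall>s u. norm (G (u + s) - G (u + fG s)) \<le> e/4"
        using ap_net[OF assms(5), of "e/4"] e by auto
      define c where "c j = (fF (real j *\<^sub>R v), fG (real j *\<^sub>R v))" for j :: nat
      have "range c \<subseteq> SF \<times> SG" using SF SG by (auto simp: c_def)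
      then have "finite (range c)" using SF SG by (meson finite_SigmaI finite_subset)
      then have "\<not> inj c" using finite_imageD infinite_UNIV_nat by blast
      then obtain j1 j2 where "j1 \<noteq> j2" "c j1 = c j2" unfolding inj_def by blast
      then obtain a b where ab: "a < b" "c a = c b"
      proof (cases "j1 < j2")
        case True then show ?thesis using that \<open>c j1 = c j2\<close> by blast
      next
        case False then have "j2 < j1" using \<open>j1 \<noteq> j2\<close> by simp
        then show ?thesis using that \<open>c j1 = c j2\<close> by simp
      qed
      have clF: "norm (F (u + real a *\<^sub>R v) - F (u + real b *\<^sub>R v)) \<le> e/2" for u
      proof -
        have r: "fF (real a *\<^sub>R v) = fF (real b *\<^sub>R v)" using ab(2) by (simp add: c_def)
        have "norm (F (u + real a *\<^sub>R v) - F (u + real b *\<^sub>R v)) \<le>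
          norm (F (u + real a *\<^sub>R v) - F (u + fF (real a *\<^sub>R v))) + norm (F (u + real b *\<^sub>R v) - F (u + fF (real b *\<^sub>R v)))"
          using r tri2[of "F (u + real a *\<^sub>R v)" "F (u + real b *\<^sub>R v)" "F (u + fF (real a *\<^sub>R v))"] by simp
        then show ?thesis using SF(3)[rule_format, of u "real a *\<^sub>R v"] SF(3)[rule_format, of u "real b *\<^sub>R v"] by linarith
      qed
      have clG: "norm (G (u + real a *\<^sub>R v) - G (u + real b *\<^sub>R v)) \<le> e/2" for u
      proof -
        have r: "fG (real a *\<^sub>R v) = fG (real b *\<^sub>R v)" using ab(2) by (simp add: c_def)
        have "norm (G (u + real a *\<^sub>R v) - G (u + real b *\<^sub>R v)) \<le>
          norm (G (u + real a *\<^sub>R v) - G (u + fG (real a *\<^sub>R v))) + norm (G (u + real b *\<^sub>R v) - G (u + fG (real b *\<^sub>R v)))"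
          using r tri2[of "G (u + real a *\<^sub>R v)" "G (u + real b *\<^sub>R v)" "G (u + fG (real a *\<^sub>R v))"] by simp
        then show ?thesis using SG(3)[rule_format, of u "real a *\<^sub>R v"] SG(3)[rule_format, of u "real b *\<^sub>R v"] by linarith
      qed
      define p where "p = t + real (b - a) *\<^sub>R v"
      have pI: "p \<in> I" unfolding p_def using inI[of "b - a"] ab(1) by linarith
      have pe: "(t - real a *\<^sub>R v) + real b *\<^sub>R v = p"
        using ab(1) by (simp add: p_def of_nat_diff scaleR_diff_left algebra_simps)
      have "norm (F t - F p) \<le> e/2" using clF[of "t - real a *\<^sub>R v"] pe by simp
      moreover have "norm (G t - G p) \<le> e/2" using clG[of "t - real a *\<^sub>R v"] pe by simp
      moreover have "F p = G p" using pI assms(6) by blast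
      ultimately have "norm (F t - G t) \<le> norm (F t - F p) + norm (G t - G p)"
        using tri2[of "F t" "G t" "F p"] by simp
      then show ?thesis using \<open>norm (F t - F p) \<le> e/2\<close> \<open>norm (G t - G p) \<le> e/2\<close> by linarith
    qed
    then have "norm (F t - G t) \<le> 0" using field_le_epsilon[of "norm (F t - G t)" 0] by simp
    then have "norm (F t - G t) = 0" by simp
    then show "F t = G t" by simp
  qed
qed

end
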